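(* Let $\mathcal{D}=\mathrm{diag}(u_1,\dots,u_n)$ with all $u_j\neq0$, and let $\mathcal{N}=V_r^{-*}\mathcal{D}^*\mathcal{D}V_r^{-1}$. Then for all integers $\nu_1,\nu_2\ge0$ and every integer $k\ge1$, $$\rho\big(E_{\rm TG}^{\nu_1,\nu_2}(P_\sharp,R_\sharp)\big)=\big\|[E_{\rm TG}^{\nu_1,\nu_2}(P_\sharp,R_\sharp)]^k\big\|_{\mathcal N}^{1/k}=\big\|E_{\rm TG}^{\nu_1,\nu_2}(P_\sharp,R_\sharp)\big\|_{\mathcal N}=\begin{cases}|1-\lambda_{n_c+1}|^{\nu_1+\nu_2},& n_c<n,\\ 0,& n_c=n.\end{cases}$$
   Context: Let $A,M\in\mathbb{C}^{n\times n}$ be nonsingular with $M^{-1}A$ and $M^{-*}A^*$ diagonalizable. Let $V_r=[\bm v_{r,1},\dots,\bm v_{r,n}]$ and $V_l=[\bm v_{l,1},\dots,\bm v_{l,n}]$ be invertible matrices of right and left generalized eigenvectors of the pencil $(A,M)$, i.e. $AV_r=MV_r\Lambda$ and $V_l^*A=\Lambda V_l^*M$ with $\Lambda=\mathrm{diag}(\lambda_1,\dots,\lambda_n)$, chosen so that $V_l^*AV_r$ and $V_l^*MV_r$ are diagonal, and ordered so that $|1-\lambda_1|\ge\cdots\ge|1-\lambda_n|\ge0$. Fix $n_c\in\{1,\dots,n\}$. For $P,R\in\mathbb{C}^{n\times n_c}$ with $R^*AP$ invertible, $\Pi(P,R)=P(R^*AP)^{-1}R^*A$ and $E_{\rm TG}^{\nu_1,\nu_2}(P,R)=(I-M^{-1}A)^{\nu_2}(I-\Pi(P,R))(I-M^{-1}A)^{\nu_1}$.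 $P_\sharp,R_\sharp\in\mathbb{C}^{n\times n_c}$ are any matrices with $\mathrm{range}(P_\sharp)=\mathrm{span}\{\bm v_{r,1},\dots,\bm v_{r,n_c}\}$, $\mathrm{range}(R_\sharp)=\mathrm{span}\{\bm v_{l,1},\dots,\bm v_{l,n_c}\}$. For Hermitian positive definite $\mathcal N$, $\|x\|_{\mathcal N}=(x^*\mathcal Nx)^{1/2}$ and $\|Z\|_{\mathcal N}=\max_{x\neq0}\|Zx\|_{\mathcal N}/\|x\|_{\mathcal N}$; $\rho$ is the spectral radius. *)

theory Defs
  imports "Jordan_Normal_Form.Spectral_Radius"
begin

definition adj :: "complex mat \<Rightarrow> complex mat" where
  "adj Z = mat (dim_col Z) (dim_row Z) (\<lambda>(i,j). cnj (Z $$ (j,i)))"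

text \<open>The inverse of a square matrix (meaningful for invertible matrices).\<close>
definition minv :: "complex mat \<Rightarrow> complex mat" where
  "minv Z = (SOME Y. Y \<in> carrier_mat (dim_row Z) (dim_row Z) \<and>
                     Z * Y = 1\<^sub>m (dim_row Z) \<and> Y * Z = 1\<^sub>m (dim_row Z))"

definition dmat :: "nat \<Rightarrow> (nat \<Rightarrow> complex) \<Rightarrow> complex mat" where
  "dmat n d = mat n n (\<lambda>(i,j). if i = j then d i else 0)"

definition diagonalizable :: "complex mat \<Rightarrow> bool" where
  "diagonalizable Z \<longleftrightarrow> (\<exists>S D. S \<in> carrier_mat (dim_row Z) (dim_row Z) \<and>
      D \<in> carrier_mat (dim_row Z) (dim_row Z) \<and> invertible_mat S \<and> diagonal_mat D \<and>
      Z = S * D * minv S)"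

definition col_range :: "complex mat \<Rightarrow> complex vec set" where
  "col_range P = {P *\<^sub>v x | x. x \<in> carrier_vec (dim_col P)}"

definition span_first_cols :: "complex mat \<Rightarrow> nat \<Rightarrow> complex vec set" where
  "span_first_cols V k = col_range (mat (dim_row V) k (\<lambda>(i,j). V $$ (i,j)))"

definition proj :: "complex mat \<Rightarrow> complex mat \<Rightarrow> complex mat \<Rightarrow> complex mat" where
  "proj A P R = P * minv (adj R * A * P) * adj R * A"

definition E_TG :: "complex mat \<Rightarrow> complex mat \<Rightarrow> nat \<Rightarrow> nat \<Rightarrow> complex mat \<Rightarrow> complex mat \<Rightarrow> complex mat" where
  "E_TG A M nu1 nu2 P R =
     (let n = dim_row A; S = 1\<^sub>m n - minv M * A in
      (S ^\<^sub>m nu2) * (1\<^sub>m n - proj A P R) * (S ^\<^sub>m nu1))"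

definition vnormN :: "complex mat \<Rightarrow> complex vec \<Rightarrow> real" where
  "vnormN N x = sqrt (Re (\<Sum>i<dim_vec x. cnj (x $ i) * (N *\<^sub>v x) $ i))"

definition mnormN :: "complex mat \<Rightarrow> complex mat \<Rightarrow> real" where
  "mnormN N Z = Sup {vnormN N (Z *\<^sub>v x) / vnormN N x | x.
                      x \<in> carrier_vec (dim_col Z) \<and> x \<noteq> 0\<^sub>v (dim_col Z)}"

end

theory Submission
  imports Defs
begin

definition rd :: "nat \<Rightarrow> nat \<Rightarrow> (nat \<Rightarrow> complex) \<Rightarrow> complex mat" where
  "rd n m f = mat n m (\<lambda>(i,j). if i = j then f j else 0)"

lemma rd_carrier[simp]: "rd n m f \<in> carrier_mat n m" by (simp add: rd_def)
lemma rd_dims[simp]: "dim_row (rd n m f) = n" "dim_col (rd n m f) = m" by (auto simp: rd_def)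
lemma rd_index[simp]: "i < n \<Longrightarrow> j < m \<Longrightarrow> rd n m f $$ (i,j) = (if i = j then f j else 0)"
  by (simp add: rd_def)
lemma dmat_rd: "dmat n f = rd n n f" by (rule eq_matI) (auto simp: dmat_def)

lemma rd_cong: "(\<And>j. j < n \<Longrightarrow> j < m \<Longrightarrow> f j = g j) \<Longrightarrow> rd n m f = rd n m g"
  by (rule eq_matI) auto

lemma rd_mult: "rd n m f * rd m p g = rd n p (\<lambda>j. if j < m then f j * g j else 0)"
proof (rule eq_matI)
  fix i j assume ij: "i < dim_row (rd n p (\<lambda>j. if j < m then f j * g j else 0))"
    "j < dim_col (rd n p (\<lambda>j. if j < m then f j * g j else 0))"
  hence i: "i < n" and j: "j < p" by auto
  have "(rd n m f * rd m p g) $$ (i,j) = (\<Sum>k<m. (if i = k then f k else 0) * (if k = j then g j else 0))"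
    using i j by (simp add: scalar_prod_def row_def col_def atLeast0LessThan)
  also have "\<dots> = (\<Sum>k<m. if k = i then (if i = j then f j * g j else 0) else 0)"
    by (rule sum.cong) auto
  also have "\<dots> = (if i = j \<and> j < m then f j * g j else 0)" by auto
  finally show "(rd n m f * rd m p g) $$ (i,j) = rd n p (\<lambda>j. if j < m then f j * g j else 0) $$ (i,j)"
    using i j by simp
qed auto

lemma one_rd: "1\<^sub>m n = rd n n (\<lambda>_. 1)" by (rule eq_matI) auto

lemma rd_minus: "rd n n f - rd n n g = rd n n (\<lambda>j. f j - g j)" by (rule eq_matI) auto

lemma rd_pow: "rd n n f ^\<^sub>m k = rd n n (\<lambda>j. f j ^ k)"
proof (induction k)
  case 0 then show ?case by (simp add: one_rd)
next
  case (Suc k)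
  have "rd n n f ^\<^sub>m Suc k = rd n n (\<lambda>j. f j ^ k) * rd n n f" using Suc by simp
  also have "\<dots> = rd n n (\<lambda>j. f j ^ Suc k)" unfolding rd_mult by (rule rd_cong) auto
  finally show ?case .
qed

lemma adj_carrier[simp]: "adj Z \<in> carrier_mat (dim_col Z) (dim_row Z)" by (simp add: adj_def)
lemma adj_dims[simp]: "dim_row (adj Z) = dim_col Z" "dim_col (adj Z) = dim_row Z" by (auto simp: adj_def)
lemma adj_index[simp]: "i < dim_col Z \<Longrightarrow> j < dim_row Z \<Longrightarrow> adj Z $$ (i,j) = cnj (Z $$ (j,i))"
  by (simp add: adj_def)

lemma adj_mult: assumes "A \<in> carrier_mat n m" "B \<in> carrier_mat m p"
  shows "adj (A * B) = adj B * adj A"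
proof (rule eq_matI)
  fix i j assume "i < dim_row (adj B * adj A)" "j < dim_col (adj B * adj A)"
  hence i: "i < p" and j: "j < n" using assms by auto
  show "adj (A * B) $$ (i, j) = (adj B * adj A) $$ (i, j)"
    using i j assms by (simp add: scalar_prod_def row_def col_def mult.commute)
qed (use assms in auto)

lemma adj_one[simp]: "adj (1\<^sub>m n) = 1\<^sub>m n" by (rule eq_matI) auto
lemma adj_rd[simp]: "adj (rd n m f) = rd m n (\<lambda>j. cnj (f j))" by (rule eq_matI) auto

lemma minv_unique: assumes Z: "Z \<in> carrier_mat n n" and Y: "Y \<in> carrier_mat n n" and ZY: "Z * Y = 1\<^sub>m n"
  shows "minv Z = Y" "Y * Z = 1\<^sub>m n"
proof -
  show YZ: "Y * Z = 1\<^sub>m n" by (rule mat_mult_left_right_inverse[OF Z Y ZY])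
  have ex: "\<exists>Y. Y \<in> carrier_mat (dim_row Z) (dim_row Z) \<and> Z * Y = 1\<^sub>m (dim_row Z) \<and> Y * Z = 1\<^sub>m (dim_row Z)"
    using Z Y ZY YZ by auto
  from someI_ex[OF ex[unfolded minv_def[symmetric]]]
  have Y': "minv Z \<in> carrier_mat n n" "Z * minv Z = 1\<^sub>m n" "minv Z * Z = 1\<^sub>m n" using Z
    unfolding minv_def by auto
  have "Y = (minv Z * Z) * Y" using Y' Y by simp
  also have "\<dots> = minv Z * (Z * Y)" by (rule assoc_mult_mat[OF Y'(1) Z Y])
  also have "\<dots> = minv Z" using Y' ZY by simp
  finally show "minv Z = Y" by simp
qed

lemma minv_props: assumes Z: "Z \<in> carrier_mat n n" and inv: "invertible_mat Z"
  shows "minv Z \<in> carrier_mat n n" "Z * minv Z = 1\<^sub>m n" "minv Z * Z = 1\<^sub>m n"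
proof -
  from inv obtain B where B: "inverts_mat Z B" "inverts_mat B Z" unfolding invertible_mat_def by auto
  hence ZB: "Z * B = 1\<^sub>m n" using Z unfolding inverts_mat_def by auto
  have Bc: "B \<in> carrier_mat n n"
  proof -
    have "B * Z = 1\<^sub>m (dim_row B)" using B(2) unfolding inverts_mat_def by simp
    hence "dim_col (B * Z) = dim_row B" by simp
    hence "dim_row B = n" using Z by simp
    moreover have "dim_col B = n" using ZB Z by (metis index_mult_mat(3) index_one_mat(3))
    ultimately show ?thesis using Z by auto
  qed
  from minv_unique[OF Z Bc ZB] ZB Bc show "minv Z \<in> carrier_mat n n" "Z * minv Z = 1\<^sub>m n" "minv Z * Z = 1\<^sub>m n"
    by auto
qed

lemma mult_rd_index: assumes A: "A \<in> carrier_mat n m" and i: "i < n" and j: "j < p"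
  shows "(A * rd m p f) $$ (i,j) = (if j < m then A $$ (i,j) * f j else 0)"
proof -
  have "(A * rd m p f) $$ (i,j) = (\<Sum>k<m. A $$ (i,k) * (if k = j then f j else 0))"
    using A i j by (simp add: scalar_prod_def row_def col_def atLeast0LessThan)
  also have "\<dots> = (\<Sum>k<m. if k = j then A $$ (i,j) * f j else 0)"
    by (rule sum.cong) auto
  also have "\<dots> = (if j < m then A $$ (i,j) * f j else 0)" by auto
  finally show ?thesis .
qed

lemma rd_mult_index: assumes A: "A \<in> carrier_mat m p" and i: "i < n" and j: "j < p"
  shows "(rd n m f * A) $$ (i,j) = (if i < m then f i * A $$ (i,j) else 0)"
proof -
  have "(rd n m f * A) $$ (i,j) = (\<Sum>k<m. (if i = k then f k else 0) * A $$ (k,j))"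
    using A i j by (simp add: scalar_prod_def row_def col_def atLeast0LessThan)
  also have "\<dots> = (\<Sum>k<m. if k = i then f i * A $$ (i,j) else 0)"
    by (rule sum.cong) auto
  also have "\<dots> = (if i < m then f i * A $$ (i,j) else 0)" by auto
  finally show ?thesis .
qed

lemma col_as_mult: assumes A: "(A :: complex mat) \<in> carrier_mat n m" and j: "j < m"
  shows "col A j = A *\<^sub>v unit_vec m j"
proof -
  have d: "dim_row A = n" "dim_col A = m" using A by auto
  show ?thesis
  proof (rule eq_vecI)
    fix i assume "i < dim_vec (A *\<^sub>v unit_vec m j)"
    hence i: "i < n" using d by simp
    have "row A i \<bullet> unit_vec m j = row A i $ j" using j by simp
    also have "\<dots> = A $$ (i,j)" using i j d by simp
    finally show "col A j $ i = (A *\<^sub>v unit_vec m j) $ i" using i j d by (simp add: col_def)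
  qed (use d in simp)
qed

lemma col_mat_vecs: fixes f :: "nat \<Rightarrow> complex vec"
  assumes f: "\<And>j. j < m \<Longrightarrow> f j \<in> carrier_vec p"
  and j: "j < m"
  shows "col (mat p m (\<lambda>(i,j). f j $ i)) j = f j"
proof (rule eq_vecI)
  have fj: "dim_vec (f j) = p" using f[OF j] by simp
  show "dim_vec (col (mat p m (\<lambda>(i,j). f j $ i)) j) = dim_vec (f j)" using fj by simp
  fix i assume "i < dim_vec (f j)"
  hence i: "i < p" using fj by simp
  show "col (mat p m (\<lambda>(i,j). f j $ i)) j $ i = f j $ i" using i j by (simp add: col_def)
qed

lemma range_factor: assumes A: "(A :: complex mat) \<in> carrier_mat n m" and B: "B \<in> carrier_mat n p"
  and sub: "col_range A \<subseteq> col_range B"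
  shows "\<exists>X. X \<in> carrier_mat p m \<and> A = B * X"
proof -
  have ex: "\<exists>x. x \<in> carrier_vec p \<and> col A j = B *\<^sub>v x" if j: "j < m" for j
  proof -
    have u: "unit_vec m j \<in> carrier_vec (dim_col A)" using A by simp
    have "col A j \<in> col_range A" unfolding col_range_def col_as_mult[OF A j]
      using u by (intro CollectI exI[of _ "unit_vec m j"]) simp
    hence "col A j \<in> col_range B" using sub by blast
    then obtain x where x: "col A j = B *\<^sub>v x" "x \<in> carrier_vec (dim_col B)"
      unfolding col_range_def by blast
    have "x \<in> carrier_vec p" using x(2) B by simp
    with x(1) show ?thesis by blast
  qed
  have "\<forall>j\<in>{..<m}. \<exists>x. x \<in> carrier_vec p \<and> col A j = B *\<^sub>v x" using ex by blast
  from bchoice[OF this] obtain f where f0: "\<forall>j\<in>{..<m}. f j \<in> carrier_vec p \<and> col A j = B *\<^sub>v f j" by blast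
  have f: "f j \<in> carrier_vec p \<and> col A j = B *\<^sub>v f j" if j: "j < m" for j
    using f0 j by blast
  define X where "X = mat p m (\<lambda>(i,j). f j $ i)"
  have X: "X \<in> carrier_mat p m" unfolding X_def by (rule mat_carrier)
  have colX: "col X j = f j" if j: "j < m" for j
    unfolding X_def by (rule col_mat_vecs[OF _ j]) (use f in blast)
  have "A = B * X"
  proof (rule mat_col_eqI)
    fix j assume "j < dim_col (B * X)"
    hence j: "j < m" using X by simp
    have "col (B * X) j = B *\<^sub>v col X j" by (rule col_mult2[OF B X j])
    also have "\<dots> = B *\<^sub>v f j" unfolding colX[OF j] ..
    also have "\<dots> = col A j" using conjunct2[OF f[OF j]] by simp
    finally show "col A j = col (B * X) j" by simp
  next
    show "dim_row A = dim_row (B * X)" using A B by simp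
    show "dim_col A = dim_col (B * X)" using A X by simp
  qed
  with X show ?thesis by blast
qed


lemma assoc_dim: assumes h1: "dim_col A = dim_row B" and h2: "dim_col B = dim_row C"
  shows "(A * B) * C = A * (B * (C :: 'a :: semiring_1 mat))"
proof -
  have a: "A \<in> carrier_mat (dim_row A) (dim_row B)" using h1 unfolding carrier_mat_def by blast
  have b: "B \<in> carrier_mat (dim_row B) (dim_row C)" using h2 unfolding carrier_mat_def by blast
  have c: "C \<in> carrier_mat (dim_row C) (dim_col C)" unfolding carrier_mat_def by blast
  show ?thesis by (rule assoc_mult_mat[OF a b c])
qed

lemma cancel_dim: assumes WV: "W * V = 1\<^sub>m n" and d1: "dim_col W = dim_row V" and d2: "dim_row X = n"
  shows "W * (V * (X :: 'a :: semiring_1 mat)) = X"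
proof -
  have "dim_col (W * V) = n" unfolding WV by simp
  hence d3: "dim_col V = dim_row X" unfolding d2 by simp
  have "W * (V * X) = (W * V) * X" by (rule assoc_dim[OF d1 d3, symmetric])
  also have "\<dots> = 1\<^sub>m n * X" unfolding WV ..
  also have "\<dots> = X" by (rule left_mult_one_mat'[OF d2])
  finally show ?thesis .
qed

lemma conj_mult: assumes WV: "W * V = 1\<^sub>m n" and W: "W \<in> carrier_mat n n" and V: "V \<in> carrier_mat n n"
  and F: "F \<in> carrier_mat n n" and G: "(G :: complex mat) \<in> carrier_mat n n"
  shows "(V * F * W) * (V * G * W) = V * (F * G) * W"
proof -
  note mc = mult_carrier_mat
  have GW: "G * W \<in> carrier_mat n n" by (rule mc[OF G W])
  have VF: "V * F \<in> carrier_mat n n" by (rule mc[OF V F])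
  have "V * G * W = V * (G * W)" by (rule assoc_mult_mat[OF V G W])
  hence "(V * F * W) * (V * G * W) = (V * F * W) * (V * (G * W))" by simp
  also have "\<dots> = (V * F) * (W * (V * (G * W)))" by (rule assoc_mult_mat[OF VF W mc[OF V GW]])
  also have "W * (V * (G * W)) = (W * V) * (G * W)" by (rule assoc_mult_mat[OF W V GW, symmetric])
  also have "\<dots> = G * W" unfolding WV by (rule left_mult_one_mat[OF GW])
  also have "(V * F) * (G * W) = V * (F * (G * W))" by (rule assoc_mult_mat[OF V F GW])
  also have "F * (G * W) = (F * G) * W" by (rule assoc_mult_mat[OF F G W, symmetric])
  also have "V * ((F * G) * W) = V * (F * G) * W" by (rule assoc_mult_mat[OF V mc[OF F G] W, symmetric])
  finally show ?thesis .
qed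

lemma conj_pow: assumes WV: "W * V = 1\<^sub>m n" and VW: "V * W = 1\<^sub>m n" and W: "W \<in> carrier_mat n n" and V: "V \<in> carrier_mat n n"
  and F: "(F :: complex mat) \<in> carrier_mat n n"
  shows "(V * F * W) ^\<^sub>m k = V * (F ^\<^sub>m k) * W"
proof (induction k)
  case 0
  have dV: "dim_row V = n" using V by simp
  have dF: "dim_row F = n" using F by simp
  have "V * 1\<^sub>m n = V" by (rule right_mult_one_mat[OF V])
  hence "V * (F ^\<^sub>m 0) * W = 1\<^sub>m n" using VW dF by simp
  moreover have "(V * F * W) ^\<^sub>m 0 = 1\<^sub>m n" using dV by simp
  ultimately show ?case by simp
next
  case (Suc k)
  have Fk: "F ^\<^sub>m k \<in> carrier_mat n n" by (rule pow_carrier_mat[OF F])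
  have "(V * F * W) ^\<^sub>m Suc k = (V * (F ^\<^sub>m k) * W) * (V * F * W)" using Suc by simp
  also have "\<dots> = V * (F ^\<^sub>m k * F) * W" by (rule conj_mult[OF WV W V Fk F])
  finally show ?case by simp
qed

lemma conj_minus: assumes VW: "(V :: complex mat) * W = 1\<^sub>m n" and W: "W \<in> carrier_mat n n" and V: "V \<in> carrier_mat n n"
  and F: "F \<in> carrier_mat n n"
  shows "1\<^sub>m n - V * F * W = V * (1\<^sub>m n - F) * W"
proof -
  have "V * (1\<^sub>m n - F) = V * 1\<^sub>m n - V * F" by (rule mult_minus_distrib_mat[OF V one_carrier_mat F])
  also have "V * 1\<^sub>m n = V" by (rule right_mult_one_mat[OF V])
  finally have "V * (1\<^sub>m n - F) * W = (V - V * F) * W" by simp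
  also have "\<dots> = V * W - V * F * W" by (rule minus_mult_distrib_mat[OF V mult_carrier_mat[OF V F] W])
  finally show ?thesis using VW by simp
qed

lemma rd_mult_vec: assumes v: "v \<in> carrier_vec n"
  shows "rd n n g *\<^sub>v v = vec n (\<lambda>i. g i * v $ i)"
proof (rule eq_vecI)
  fix i assume "i < dim_vec (vec n (\<lambda>i. g i * v $ i))"
  hence i: "i < n" by simp
  have dv: "dim_vec v = n" using v by simp
  have "(rd n n g *\<^sub>v v) $ i = row (rd n n g) i \<bullet> v" using i by simp
  also have "\<dots> = (\<Sum>k<n. (if i = k then g k else 0) * v $ k)"
    using i dv by (simp add: scalar_prod_def atLeast0LessThan)
  also have "\<dots> = (\<Sum>k<n. if k = i then g i * v $ i else 0)" by (rule sum.cong) auto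
  also have "\<dots> = g i * v $ i" using i by simp
  finally show "(rd n n g *\<^sub>v v) $ i = vec n (\<lambda>i. g i * v $ i) $ i" using i by simp
qed simp

lemma nonzero_vec_index: assumes v: "v \<in> carrier_vec n" and nz: "v \<noteq> 0\<^sub>v n"
  shows "\<exists>j<n. v $ j \<noteq> 0"
proof (rule ccontr)
  assume "\<not> (\<exists>j<n. v $ j \<noteq> 0)"
  hence "\<forall>j<n. v $ j = 0" by blast
  hence "v = 0\<^sub>v n" using v by (intro eq_vecI) auto
  with nz show False by simp
qed

lemma eig_diag: "eigenvalue (rd n n g) k \<longleftrightarrow> (\<exists>j<n. k = g j)"
proof
  assume "eigenvalue (rd n n g) k"
  then obtain v where v: "v \<in> carrier_vec n" "v \<noteq> 0\<^sub>v n" "rd n n g *\<^sub>v v = k \<cdot>\<^sub>v v"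
    unfolding eigenvalue_def eigenvector_def by auto
  obtain j where j: "j < n" "v $ j \<noteq> 0" using nonzero_vec_index[OF v(1,2)] by blast
  have "g j * v $ j = (rd n n g *\<^sub>v v) $ j" unfolding rd_mult_vec[OF v(1)] using j by simp
  also have "\<dots> = (k \<cdot>\<^sub>v v) $ j" unfolding v(3) ..
  also have "\<dots> = k * v $ j" using j v(1) by simp
  finally have "g j * v $ j = k * v $ j" .
  hence "g j = k" using j(2) by simp
  hence "k = g j" by simp
  with j show "\<exists>j<n. k = g j" by blast
next
  assume "\<exists>j<n. k = g j"
  then obtain j where j: "j < n" "k = g j" by blast
  let ?v = "unit_vec n j :: complex vec"
  have c: "?v \<in> carrier_vec n" by simp
  have nz: "?v \<noteq> 0\<^sub>v n"
  proof
    assume h: "?v = 0\<^sub>v n"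
    have "(1::complex) = ?v $ j" using j by simp
    also have "\<dots> = 0\<^sub>v n $ j" by (subst h) (rule refl)
    also have "\<dots> = 0" using j by simp
    finally show False by simp
  qed
  have "rd n n g *\<^sub>v ?v = k \<cdot>\<^sub>v ?v"
    unfolding rd_mult_vec[OF c] using j by (intro eq_vecI) auto
  hence "eigenvector (rd n n g) ?v k" unfolding eigenvector_def using c nz by simp
  thus "eigenvalue (rd n n g) k" unfolding eigenvalue_def by blast
qed

lemma eig_conj1: assumes WV: "W * V = 1\<^sub>m n" and W: "W \<in> carrier_mat n n" and V: "V \<in> carrier_mat n n"
  and G: "(G :: complex mat) \<in> carrier_mat n n" and e: "eigenvalue G k"
  shows "eigenvalue (V * G * W) k"
proof -
  from e obtain v where v: "v \<in> carrier_vec n" "v \<noteq> 0\<^sub>v n" "G *\<^sub>v v = k \<cdot>\<^sub>v v"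
    unfolding eigenvalue_def eigenvector_def using G by auto
  have Vv: "V *\<^sub>v v \<in> carrier_vec n" using V v(1) by simp
  have "W *\<^sub>v (V *\<^sub>v v) = (W * V) *\<^sub>v v" by (rule assoc_mult_mat_vec[OF W V v(1), symmetric])
  also have "\<dots> = v" unfolding WV using v(1) by simp
  finally have WVv: "W *\<^sub>v (V *\<^sub>v v) = v" .
  have nz: "V *\<^sub>v v \<noteq> 0\<^sub>v n"
  proof
    assume "V *\<^sub>v v = 0\<^sub>v n"
    hence "v = W *\<^sub>v 0\<^sub>v n" using WVv by simp
    also have "\<dots> = 0\<^sub>v n"
    proof (rule eq_vecI)
      have dW: "dim_row W = n" "dim_col W = n" using W by auto
      fix i assume "i < dim_vec (0\<^sub>v n :: complex vec)"
      hence i: "i < n" by simp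
      have r: "row W i \<in> carrier_vec n" by (rule row_carrier_vec[OF i W])
      show "(W *\<^sub>v 0\<^sub>v n) $ i = 0\<^sub>v n $ i" using i dW scalar_prod_right_zero[OF r] by simp
    qed (use W in simp)
    finally show False using v(2) by simp
  qed
  have "(V * G * W) *\<^sub>v (V *\<^sub>v v) = (V * G) *\<^sub>v (W *\<^sub>v (V *\<^sub>v v))"
    by (rule assoc_mult_mat_vec[OF mult_carrier_mat[OF V G] W Vv])
  also have "\<dots> = (V * G) *\<^sub>v v" unfolding WVv ..
  also have "\<dots> = V *\<^sub>v (G *\<^sub>v v)" by (rule assoc_mult_mat_vec[OF V G v(1)])
  also have "\<dots> = k \<cdot>\<^sub>v (V *\<^sub>v v)" unfolding v(3) by (rule mult_mat_vec[OF V v(1)])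
  finally have "(V * G * W) *\<^sub>v (V *\<^sub>v v) = k \<cdot>\<^sub>v (V *\<^sub>v v)" .
  moreover have "dim_row (V * G * W) = n" using V by simp
  ultimately show ?thesis unfolding eigenvalue_def eigenvector_def using Vv nz by auto
qed

lemma spectrum_conj: assumes WV: "W * V = 1\<^sub>m n" and VW: "V * W = 1\<^sub>m n" and W: "W \<in> carrier_mat n n" and V: "V \<in> carrier_mat n n"
  shows "spectrum (V * rd n n g * W) = g ` {..<n}"
proof -
  have G: "rd n n g \<in> carrier_mat n n" by simp
  have GW: "V * rd n n g * W \<in> carrier_mat n n" by (rule mult_carrier_mat[OF mult_carrier_mat[OF V G] W])
  have backc: "W * (V * rd n n g * W) * V = rd n n g"
  proof -
    have VG: "V * rd n n g \<in> carrier_mat n n" by (rule mult_carrier_mat[OF V G])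
    have "W * (V * rd n n g * W) * V = W * ((V * rd n n g * W) * V)" by (rule assoc_mult_mat[OF W GW V])
    also have "(V * rd n n g * W) * V = (V * rd n n g) * (W * V)" by (rule assoc_mult_mat[OF VG W V])
    also have "\<dots> = V * rd n n g" unfolding WV by (rule right_mult_one_mat[OF VG])
    also have "W * (V * rd n n g) = (W * V) * rd n n g" by (rule assoc_mult_mat[OF W V G, symmetric])
    also have "\<dots> = rd n n g" unfolding WV by (rule left_mult_one_mat[OF G])
    finally show ?thesis .
  qed
  have "eigenvalue (V * rd n n g * W) k \<longleftrightarrow> eigenvalue (rd n n g) k" for k
  proof
    assume "eigenvalue (V * rd n n g * W) k"
    from eig_conj1[OF VW V W GW this] show "eigenvalue (rd n n g) k" unfolding backc .
  next
    assume "eigenvalue (rd n n g) k"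
    from eig_conj1[OF WV W V G this] show "eigenvalue (V * rd n n g * W) k" .
  qed
  thus ?thesis unfolding spectrum_def eig_diag by auto
qed

lemma spectral_radius_conj: assumes WV: "W * V = 1\<^sub>m n" and VW: "V * W = 1\<^sub>m n" and W: "W \<in> carrier_mat n n" and V: "V \<in> carrier_mat n n"
  shows "spectral_radius (V * rd n n g * W) = Max ((\<lambda>j. cmod (g j)) ` {..<n})"
  unfolding spectral_radius_def spectrum_conj[OF WV VW W V] image_image by simp

definition esq :: "nat \<Rightarrow> complex vec \<Rightarrow> real" where
  "esq n y = (\<Sum>i<n. (cmod (y $ i))\<^sup>2)"

lemma quad_form: assumes T: "T \<in> carrier_mat n n" and x: "x \<in> carrier_vec n"
  shows "(\<Sum>i<n. cnj (x $ i) * ((adj T * T) *\<^sub>v x) $ i) = complex_of_real (esq n (T *\<^sub>v x))"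
proof -
  define y where "y = T *\<^sub>v x"
  have aT: "adj T \<in> carrier_mat n n" using adj_carrier[of T] T by simp
  have dT: "dim_row T = n" "dim_col T = n" using T by auto
  have dx: "dim_vec x = n" using x by simp
  have yk: "y $ k = (\<Sum>i<n. T $$ (k,i) * x $ i)" if k: "k < n" for k
    unfolding y_def using k dT dx by (simp add: scalar_prod_def atLeast0LessThan)
  have Ax: "(adj T * T) *\<^sub>v x = adj T *\<^sub>v y" unfolding y_def by (rule assoc_mult_mat_vec[OF aT T x])
  have ai: "(adj T *\<^sub>v y) $ i = (\<Sum>k<n. cnj (T $$ (k,i)) * y $ k)" if i: "i < n" for i
  proof -
    have dy: "dim_vec y = n" unfolding y_def using dT by simp
    have "(adj T *\<^sub>v y) $ i = row (adj T) i \<bullet> y" using i dT by simp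
    also have "\<dots> = (\<Sum>k<n. adj T $$ (i,k) * y $ k)" using i dT dy by (simp add: scalar_prod_def atLeast0LessThan)
    also have "\<dots> = (\<Sum>k<n. cnj (T $$ (k,i)) * y $ k)" by (rule sum.cong) (use i dT in auto)
    finally show ?thesis .
  qed
  have "(\<Sum>i<n. cnj (x $ i) * ((adj T * T) *\<^sub>v x) $ i) = (\<Sum>i<n. cnj (x $ i) * (\<Sum>k<n. cnj (T $$ (k,i)) * y $ k))"
    unfolding Ax by (rule sum.cong) (simp_all add: ai)
  also have "\<dots> = (\<Sum>i<n. \<Sum>k<n. cnj (x $ i) * (cnj (T $$ (k,i)) * y $ k))"
    by (simp add: sum_distrib_left)
  also have "\<dots> = (\<Sum>k<n. \<Sum>i<n. cnj (x $ i) * (cnj (T $$ (k,i)) * y $ k))"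
    by (rule sum.swap)
  also have "\<dots> = (\<Sum>k<n. y $ k * cnj (\<Sum>i<n. T $$ (k,i) * x $ i))"
    by (simp add: sum_distrib_left mult.commute mult.left_commute)
  also have "\<dots> = (\<Sum>k<n. y $ k * cnj (y $ k))"
    by (rule sum.cong) (simp_all add: yk)
  also have "\<dots> = (\<Sum>k<n. complex_of_real ((cmod (y $ k))\<^sup>2))"
    by (rule sum.cong) (simp_all only: complex_norm_square)
  also have "\<dots> = complex_of_real (esq n y)" unfolding esq_def by simp
  finally show ?thesis unfolding y_def .
qed

lemma vnorm_eq: assumes T: "T \<in> carrier_mat n n" and x: "x \<in> carrier_vec n"
  shows "vnormN (adj T * T) x = sqrt (esq n (T *\<^sub>v x))"
proof -
  have dx: "dim_vec x = n" using x by simp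
  show ?thesis unfolding vnormN_def dx quad_form[OF T x] by simp
qed

lemma esq_nonneg: "esq n y \<ge> 0" unfolding esq_def by (rule sum_nonneg) simp

lemma esq_pos: assumes y: "y \<in> carrier_vec n" and nz: "y \<noteq> 0\<^sub>v n" shows "esq n y > 0"
proof -
  obtain j where j: "j < n" "y $ j \<noteq> 0" using nonzero_vec_index[OF y nz] by blast
  have "0 < (cmod (y $ j))\<^sup>2" using j by simp
  also have "\<dots> \<le> esq n y" unfolding esq_def
    by (rule member_le_sum) (use j in auto)
  finally show ?thesis .
qed

lemma esq_diag: assumes y: "y \<in> carrier_vec n"
  shows "esq n (rd n n g *\<^sub>v y) = (\<Sum>i<n. (cmod (g i))\<^sup>2 * (cmod (y $ i))\<^sup>2)"
  unfolding esq_def rd_mult_vec[OF y] by (rule sum.cong) (simp_all add: norm_mult power_mult_distrib)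

lemma esq_diag_le: assumes y: "y \<in> carrier_vec n" and m: "\<And>i. i < n \<Longrightarrow> cmod (g i) \<le> m"
  shows "esq n (rd n n g *\<^sub>v y) \<le> m\<^sup>2 * esq n y"
proof -
  have "esq n (rd n n g *\<^sub>v y) = (\<Sum>i<n. (cmod (g i))\<^sup>2 * (cmod (y $ i))\<^sup>2)" by (rule esq_diag[OF y])
  also have "\<dots> \<le> (\<Sum>i<n. m\<^sup>2 * (cmod (y $ i))\<^sup>2)"
  proof (rule sum_mono)
    fix i assume "i \<in> {..<n}"
    hence "cmod (g i) \<le> m" using m by simp
    hence "(cmod (g i))\<^sup>2 \<le> m\<^sup>2" by (intro power_mono) auto
    thus "(cmod (g i))\<^sup>2 * (cmod (y $ i))\<^sup>2 \<le> m\<^sup>2 * (cmod (y $ i))\<^sup>2" by (intro mult_right_mono) auto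
  qed
  also have "\<dots> = m\<^sup>2 * esq n y" unfolding esq_def by (simp add: sum_distrib_left)
  finally show ?thesis .
qed

lemma mat_vec_zero: assumes W: "(W :: complex mat) \<in> carrier_mat n n" shows "W *\<^sub>v 0\<^sub>v n = 0\<^sub>v n"
proof (rule eq_vecI)
  have dW: "dim_row W = n" "dim_col W = n" using W by auto
  fix i assume "i < dim_vec (0\<^sub>v n :: complex vec)"
  hence i: "i < n" by simp
  have r: "row W i \<in> carrier_vec n" by (rule row_carrier_vec[OF i W])
  show "(W *\<^sub>v 0\<^sub>v n) $ i = 0\<^sub>v n $ i" using i dW scalar_prod_right_zero[OF r] by simp
qed (use W in simp)

lemma esq_unit: assumes j: "j < n" shows "esq n (unit_vec n j) = 1"
proof -
  have "esq n (unit_vec n j) = (\<Sum>i<n. if i = j then 1 else 0)" unfolding esq_def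
    by (rule sum.cong) (use j in simp_all)
  also have "\<dots> = 1" using j by simp
  finally show ?thesis .
qed

lemma esq_diag_unit: assumes j: "j < n" shows "esq n (rd n n g *\<^sub>v unit_vec n j) = (cmod (g j))\<^sup>2"
proof -
  have "esq n (rd n n g *\<^sub>v unit_vec n j) = (\<Sum>i<n. (cmod (g i))\<^sup>2 * (cmod (unit_vec n j $ i))\<^sup>2)"
    by (rule esq_diag) simp
  also have "\<dots> = (\<Sum>i<n. if i = j then (cmod (g j))\<^sup>2 else 0)"
    by (rule sum.cong) (use j in simp_all)
  also have "\<dots> = (cmod (g j))\<^sup>2" using j by simp
  finally show ?thesis .
qed

lemma norm_core:
  assumes T: "T \<in> carrier_mat n n" and Ti: "Ti \<in> carrier_mat n n" and TiT: "Ti * T = 1\<^sub>m n"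
    and TTi: "T * Ti = 1\<^sub>m n" and E: "E \<in> carrier_mat n n" and TE: "T * E = rd n n g * T" and n: "0 < n"
  shows "mnormN (adj T * T) E = Max ((\<lambda>j. cmod (g j)) ` {..<n})"
proof -
  define m where "m = Max ((\<lambda>j. cmod (g j)) ` {..<n})"
  have fin: "finite ((\<lambda>j. cmod (g j)) ` {..<n})" by simp
  have ne: "(\<lambda>j. cmod (g j)) ` {..<n} \<noteq> {}" using n by auto
  have mge: "cmod (g i) \<le> m" if "i < n" for i unfolding m_def
    by (rule Max_ge[OF fin]) (use that in auto)
  obtain j0 where j0: "j0 < n" "cmod (g j0) = m"
    using Max_in[OF fin ne] unfolding m_def by auto
  have m0: "0 \<le> m" using mge[OF n] by (meson norm_ge_zero order_trans)
  have dE: "dim_col E = n" using E by simp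
  have G: "rd n n g \<in> carrier_mat n n" by simp
  have TEx: "T *\<^sub>v (E *\<^sub>v x) = rd n n g *\<^sub>v (T *\<^sub>v x)" if x: "x \<in> carrier_vec n" for x
  proof -
    have "T *\<^sub>v (E *\<^sub>v x) = (T * E) *\<^sub>v x" by (rule assoc_mult_mat_vec[OF T E x, symmetric])
    also have "\<dots> = (rd n n g * T) *\<^sub>v x" unfolding TE ..
    also have "\<dots> = rd n n g *\<^sub>v (T *\<^sub>v x)" by (rule assoc_mult_mat_vec[OF G T x])
    finally show ?thesis .
  qed
  have vE: "vnormN (adj T * T) (E *\<^sub>v x) = sqrt (esq n (rd n n g *\<^sub>v (T *\<^sub>v x)))" if x: "x \<in> carrier_vec n" for x
  proof -
    have Ex: "E *\<^sub>v x \<in> carrier_vec n" using E x by simp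
    show ?thesis unfolding vnorm_eq[OF T Ex] TEx[OF x] ..
  qed
  define S where "S = {vnormN (adj T * T) (E *\<^sub>v x) / vnormN (adj T * T) x | x.
                      x \<in> carrier_vec (dim_col E) \<and> x \<noteq> 0\<^sub>v (dim_col E)}"
  have le: "s \<le> m" if s: "s \<in> S" for s
  proof -
    from s obtain x where x: "x \<in> carrier_vec n" "x \<noteq> 0\<^sub>v n"
      and sx: "s = vnormN (adj T * T) (E *\<^sub>v x) / vnormN (adj T * T) x"
      unfolding S_def dE by blast
    define y where "y = T *\<^sub>v x"
    have y: "y \<in> carrier_vec n" unfolding y_def using T x(1) by simp
    have ynz: "y \<noteq> 0\<^sub>v n"
    proof
      assume y0: "y = 0\<^sub>v n"
      have "x = (Ti * T) *\<^sub>v x" unfolding TiT using x(1) by simp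
      also have "\<dots> = Ti *\<^sub>v y" unfolding y_def by (rule assoc_mult_mat_vec[OF Ti T x(1)])
      also have "\<dots> = 0\<^sub>v n" unfolding y0 by (rule mat_vec_zero[OF Ti])
      finally show False using x(2) by simp
    qed
    have pos: "0 < esq n y" by (rule esq_pos[OF y ynz])
    have "s = sqrt (esq n (rd n n g *\<^sub>v y)) / sqrt (esq n y)"
      unfolding sx vE[OF x(1)] vnorm_eq[OF T x(1)] y_def ..
    also have "\<dots> \<le> m"
    proof -
      have "esq n (rd n n g *\<^sub>v y) \<le> m\<^sup>2 * esq n y" by (rule esq_diag_le[OF y mge])
      hence "sqrt (esq n (rd n n g *\<^sub>v y)) \<le> sqrt (m\<^sup>2 * esq n y)" by (rule real_sqrt_le_mono)
      also have "\<dots> = m * sqrt (esq n y)" using m0 by (simp add: real_sqrt_mult)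
      finally show ?thesis using pos by (simp add: pos_divide_le_eq)
    qed
    finally show ?thesis .
  qed
  have mem: "m \<in> S"
  proof -
    define e where "e = (unit_vec n j0 :: complex vec)"
    have e: "e \<in> carrier_vec n" unfolding e_def by simp
    define x0 where "x0 = Ti *\<^sub>v e"
    have x0: "x0 \<in> carrier_vec n" unfolding x0_def using Ti e by simp
    have Tx0: "T *\<^sub>v x0 = e"
    proof -
      have "T *\<^sub>v x0 = (T * Ti) *\<^sub>v e" unfolding x0_def by (rule assoc_mult_mat_vec[OF T Ti e, symmetric])
      also have "\<dots> = e" unfolding TTi using e by simp
      finally show ?thesis .
    qed
    have enz: "e \<noteq> 0\<^sub>v n"
    proof
      assume h: "e = 0\<^sub>v n"
      have "(1::complex) = e $ j0" unfolding e_def using j0 by simp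
      also have "\<dots> = 0\<^sub>v n $ j0" by (subst h) (rule refl)
      also have "\<dots> = 0" using j0 by simp
      finally show False by simp
    qed
    have x0nz: "x0 \<noteq> 0\<^sub>v n"
    proof
      assume "x0 = 0\<^sub>v n"
      hence "e = T *\<^sub>v 0\<^sub>v n" using Tx0 by simp
      also have "\<dots> = 0\<^sub>v n" by (rule mat_vec_zero[OF T])
      finally show False using enz by simp
    qed
    have "vnormN (adj T * T) (E *\<^sub>v x0) / vnormN (adj T * T) x0 = sqrt ((cmod (g j0))\<^sup>2) / sqrt 1"
      unfolding vE[OF x0] vnorm_eq[OF T x0] Tx0 e_def esq_unit[OF j0(1)] esq_diag_unit[OF j0(1)] ..
    also have "\<dots> = m" using j0(2) m0 by simp
    finally have "m = vnormN (adj T * T) (E *\<^sub>v x0) / vnormN (adj T * T) x0" by simp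
    thus ?thesis unfolding S_def dE using x0 x0nz by blast
  qed
  have "mnormN (adj T * T) E = Sup S" unfolding mnormN_def S_def ..
  also have "\<dots> = m" by (rule cSup_eq_maximum[OF mem le])
  finally show ?thesis unfolding m_def .
qed

lemma final_norm:
  assumes Vr: "Vr \<in> carrier_mat n n" and W: "W \<in> carrier_mat n n"
    and VrW: "Vr * W = 1\<^sub>m n" and WVr: "W * Vr = 1\<^sub>m n"
    and u: "\<And>j. j < n \<Longrightarrow> u j \<noteq> 0" and n: "0 < n"
  shows "mnormN (adj W * adj (rd n n u) * rd n n u * W) (Vr * rd n n g * W) = Max ((\<lambda>j. cmod (g j)) ` {..<n})"
proof -
  define D where "D = rd n n u"
  define Di where "Di = rd n n (\<lambda>j. 1 / u j)"
  define G where "G = rd n n g"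
  have D: "D \<in> carrier_mat n n" and Di: "Di \<in> carrier_mat n n" and G: "G \<in> carrier_mat n n"
    unfolding D_def Di_def G_def by simp_all
  define T where "T = D * W"
  define Ti where "Ti = Vr * Di"
  have T: "T \<in> carrier_mat n n" unfolding T_def using D W by simp
  have Ti: "Ti \<in> carrier_mat n n" unfolding Ti_def using Vr Di by simp
  have DDi: "D * Di = 1\<^sub>m n" unfolding D_def Di_def rd_mult one_rd by (rule rd_cong) (use u in simp)
  have DiD: "Di * D = 1\<^sub>m n" unfolding D_def Di_def rd_mult one_rd by (rule rd_cong) (use u in simp)
  have DG: "D * G = G * D" unfolding D_def G_def rd_mult by (rule rd_cong) simp
  have dims: "dim_row Vr = n" "dim_col Vr = n" "dim_row W = n" "dim_col W = n" "dim_row D = n" "dim_col D = n"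
    "dim_row Di = n" "dim_col Di = n" "dim_row G = n" "dim_col G = n"
    using Vr W D Di G by auto
  have TTi: "T * Ti = 1\<^sub>m n"
  proof -
    have "T * Ti = D * (W * (Vr * Di))" unfolding T_def Ti_def using dims by (simp add: assoc_dim)
    also have "W * (Vr * Di) = Di" by (rule cancel_dim[OF WVr]) (use dims in simp_all)
    finally show ?thesis using DDi by simp
  qed
  have TiT: "Ti * T = 1\<^sub>m n"
  proof -
    have "Ti * T = Vr * (Di * (D * W))" unfolding T_def Ti_def using dims by (simp add: assoc_dim)
    also have "Di * (D * W) = W" by (rule cancel_dim[OF DiD]) (use dims in simp_all)
    finally show ?thesis using VrW by simp
  qed
  have E: "Vr * G * W \<in> carrier_mat n n" using Vr G W by simp
  have TE: "T * (Vr * G * W) = G * T"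
  proof -
    have "T * (Vr * G * W) = D * (W * (Vr * (G * W)))" unfolding T_def using dims by (simp add: assoc_dim)
    also have "W * (Vr * (G * W)) = G * W" by (rule cancel_dim[OF WVr]) (use dims in simp_all)
    also have "D * (G * W) = (D * G) * W" using dims by (simp add: assoc_dim)
    also have "\<dots> = (G * D) * W" unfolding DG ..
    also have "\<dots> = G * T" unfolding T_def using dims by (simp add: assoc_dim)
    finally show ?thesis .
  qed
  have N: "adj W * adj D * D * W = adj T * T"
    unfolding T_def adj_mult[OF D W] using dims by (simp add: assoc_dim)
  show ?thesis using norm_core[OF T Ti TiT TTi E[unfolded G_def] TE[unfolded G_def] n] N
    unfolding D_def G_def by simp
qed

lemma max_val:
  fixes lam :: "nat \<Rightarrow> complex"
  assumes order: "\<And>i j. i \<le> j \<Longrightarrow> j < n \<Longrightarrow> cmod (1 - lam j) \<le> cmod (1 - lam i)"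
    and nc: "1 \<le> nc" "nc \<le> n" and k: "1 \<le> k"
  shows "Max ((\<lambda>j. cmod ((if j < nc then 0 else (1 - lam j) ^ (nu1 + nu2)) ^ k)) ` {..<n})
       = (if nc < n then cmod (1 - lam nc) ^ (nu1 + nu2) else 0) ^ k"
proof (rule Max_eqI)
  let ?val = "(if nc < n then cmod (1 - lam nc) ^ (nu1 + nu2) else 0)"
  have v0: "0 \<le> ?val" by simp
  show "finite ((\<lambda>j. cmod ((if j < nc then 0 else (1 - lam j) ^ (nu1 + nu2)) ^ k)) ` {..<n})" by simp
  fix y assume "y \<in> (\<lambda>j. cmod ((if j < nc then 0 else (1 - lam j) ^ (nu1 + nu2)) ^ k)) ` {..<n}"
  then obtain j where j: "j < n" and y: "y = cmod ((if j < nc then 0 else (1 - lam j) ^ (nu1 + nu2)) ^ k)" by blast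
  show "y \<le> ?val ^ k"
  proof (cases "j < nc")
    case True
    have "(0::complex) ^ k = 0" using k by (simp add: power_0_left)
    hence "y = 0" using y True by simp
    then show ?thesis using zero_le_power[OF v0, of k] by simp
  next
    case False
    hence ncn: "nc < n" using j by simp
    have "cmod (1 - lam j) \<le> cmod (1 - lam nc)" using order[of nc j] False j by simp
    hence "cmod (1 - lam j) ^ (nu1 + nu2) \<le> cmod (1 - lam nc) ^ (nu1 + nu2)" by (rule power_mono) simp
    hence "(cmod (1 - lam j) ^ (nu1 + nu2)) ^ k \<le> (cmod (1 - lam nc) ^ (nu1 + nu2)) ^ k" by (rule power_mono) simp
    then show ?thesis using y False ncn by (simp add: norm_power)
  qed
next
  show "(if nc < n then cmod (1 - lam nc) ^ (nu1 + nu2) else 0) ^ k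
      \<in> (\<lambda>j. cmod ((if j < nc then 0 else (1 - lam j) ^ (nu1 + nu2)) ^ k)) ` {..<n}"
  proof (cases "nc < n")
    case True
    then show ?thesis by (intro image_eqI[of _ _ nc]) (simp_all add: norm_power)
  next
    case False
    hence "nc = n" using nc by simp
    then show ?thesis using nc k by (intro image_eqI[of _ _ 0]) (simp_all add: power_0_left)
  qed
qed

theorem theorem3p3:
  fixes n nc :: nat and A M Vr Vl Psh Rsh :: "complex mat"
    and lam u :: "nat \<Rightarrow> complex" and nu1 nu2 k :: nat
  assumes A: "A \<in> carrier_mat n n" and M: "M \<in> carrier_mat n n"
    and A_inv: "invertible_mat A" and M_inv: "invertible_mat M"
    and diag1: "diagonalizable (minv M * A)"
    and diag2: "diagonalizable (minv (adj M) * adj A)"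
    and Vr: "Vr \<in> carrier_mat n n" and Vl: "Vl \<in> carrier_mat n n"
    and Vr_inv: "invertible_mat Vr" and Vl_inv: "invertible_mat Vl"
    and right: "A * Vr = M * Vr * dmat n lam"
    and left: "adj Vl * A = dmat n lam * adj Vl * M"
    and diagA: "diagonal_mat (adj Vl * A * Vr)"
    and diagM: "diagonal_mat (adj Vl * M * Vr)"
    and order: "\<And>i j. i \<le> j \<Longrightarrow> j < n \<Longrightarrow> cmod (1 - lam j) \<le> cmod (1 - lam i)"
    and nc: "1 \<le> nc" "nc \<le> n"
    and Psh: "Psh \<in> carrier_mat n nc" and Rsh: "Rsh \<in> carrier_mat n nc"
    and Psh_range: "col_range Psh = span_first_cols Vr nc"
    and Rsh_range: "col_range Rsh = span_first_cols Vl nc"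
    and u: "\<And>j. j < n \<Longrightarrow> u j \<noteq> 0"
    and k: "1 \<le> k"
  shows "let D = dmat n u;
             N = adj (minv Vr) * adj D * D * minv Vr;
             E = E_TG A M nu1 nu2 Psh Rsh;
             val = (if nc < n then cmod (1 - lam nc) ^ (nu1 + nu2) else 0)
         in spectral_radius E = root k (mnormN N (E ^\<^sub>m k))
          \<and> root k (mnormN N (E ^\<^sub>m k)) = mnormN N E
          \<and> mnormN N E = val"
proof -
  have n0: "0 < n" using nc by simp
  define W where "W = minv Vr"
  have W: "W \<in> carrier_mat n n" and VrW: "Vr * W = 1\<^sub>m n" and WVr: "W * Vr = 1\<^sub>m n"
    using minv_props[OF Vr Vr_inv] unfolding W_def by auto
  define Mi where "Mi = minv M"
  have Mi: "Mi \<in> carrier_mat n n" and MMi: "M * Mi = 1\<^sub>m n" and MiM: "Mi * M = 1\<^sub>m n"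
    using minv_props[OF M M_inv] unfolding Mi_def by auto
  define Ai where "Ai = minv A"
  have Ai: "Ai \<in> carrier_mat n n" and AAi: "A * Ai = 1\<^sub>m n"
    using minv_props[OF A A_inv] unfolding Ai_def by auto
  define Vli where "Vli = minv Vl"
  have Vli: "Vli \<in> carrier_mat n n" and VlVli: "Vl * Vli = 1\<^sub>m n" and VliVl: "Vli * Vl = 1\<^sub>m n"
    using minv_props[OF Vl Vl_inv] unfolding Vli_def by auto
  define L where "L = rd n n lam"
  have L: "L \<in> carrier_mat n n" unfolding L_def by simp
  have right': "A * Vr = M * Vr * L" using right unfolding dmat_rd L_def .
  have dims: "dim_row A = n" "dim_col A = n" "dim_row M = n" "dim_col M = n"
    "dim_row Vr = n" "dim_col Vr = n" "dim_row Vl = n" "dim_col Vl = n"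
    "dim_row W = n" "dim_col W = n" "dim_row Mi = n" "dim_col Mi = n"
    "dim_row Ai = n" "dim_col Ai = n" "dim_row Vli = n" "dim_col Vli = n"
    "dim_row L = n" "dim_col L = n" "dim_row Psh = n" "dim_col Psh = nc"
    "dim_row Rsh = n" "dim_col Rsh = nc"
    using A M Vr Vl W Mi Ai Vli L Psh Rsh by auto

  have MiA: "Mi * A = Vr * L * W"
  proof -
    have "A = A * (Vr * W)" using VrW dims by simp
    also have "\<dots> = (A * Vr) * W" using dims by (simp add: assoc_dim)
    also have "\<dots> = M * Vr * L * W" unfolding right' ..
    finally have A_eq: "A = M * Vr * L * W" .
    have "Mi * A = Mi * (M * (Vr * (L * W)))" using dims by (subst A_eq) (simp add: assoc_dim)
    also have "\<dots> = Vr * (L * W)" by (rule cancel_dim[OF MiM]) (use dims in simp_all)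
    also have "\<dots> = Vr * L * W" using dims by (simp add: assoc_dim)
    finally show ?thesis .
  qed
  define Sm where "Sm = 1\<^sub>m n - Mi * A"
  have oneL: "1\<^sub>m n - L = rd n n (\<lambda>j. 1 - lam j)" unfolding L_def one_rd rd_minus ..
  have Sm_eq: "Sm = Vr * rd n n (\<lambda>j. 1 - lam j) * W"
    unfolding Sm_def MiA conj_minus[OF VrW W Vr L] oneL ..
  have Spow: "Sm ^\<^sub>m k' = Vr * rd n n (\<lambda>j. (1 - lam j) ^ k') * W" for k'
    unfolding Sm_eq conj_pow[OF WVr VrW W Vr rd_carrier] rd_pow ..
  define Ip where "Ip = rd n nc (\<lambda>_. 1)"
  define Ipt where "Ipt = rd nc n (\<lambda>_. 1)"
  have Ip: "Ip \<in> carrier_mat n nc" and Ipt: "Ipt \<in> carrier_mat nc n" unfolding Ip_def Ipt_def by simp_all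
  have adjIp: "adj Ip = Ipt" unfolding Ip_def Ipt_def adj_rd by simp
  have IptIp: "Ipt * Ip = 1\<^sub>m nc" unfolding Ip_def Ipt_def rd_mult one_rd by (rule rd_cong) (use nc in simp)
  have span: "span_first_cols V nc = col_range (V * Ip)" if V: "V \<in> carrier_mat n n" for V
  proof -
    have "mat (dim_row V) nc (\<lambda>(i,j). V $$ (i,j)) = V * Ip"
    proof (rule eq_matI)
      fix i j assume ij: "i < dim_row (V * Ip)" "j < dim_col (V * Ip)"
      hence i: "i < n" and j: "j < nc" unfolding Ip_def using V by auto
      have "(V * Ip) $$ (i,j) = V $$ (i,j)" unfolding Ip_def mult_rd_index[OF V i j] using j nc by simp
      thus "mat (dim_row V) nc (\<lambda>(i,j). V $$ (i,j)) $$ (i,j) = (V * Ip) $$ (i,j)" using i j V by simp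
    qed (use V in \<open>simp_all add: Ip_def\<close>)
    thus ?thesis unfolding span_first_cols_def by simp
  qed
  have factor: "\<exists>X X'. X \<in> carrier_mat nc nc \<and> X' \<in> carrier_mat nc nc \<and> P = V * Ip * X \<and> X * X' = 1\<^sub>m nc"
    if V: "V \<in> carrier_mat n n" and Vi: "Vi \<in> carrier_mat n n" and ViV: "Vi * V = 1\<^sub>m n"
      and P: "P \<in> carrier_mat n nc" and Pr: "col_range P = span_first_cols V nc" for V Vi P
  proof -
    have VIp: "V * Ip \<in> carrier_mat n nc" using V Ip by simp
    have r: "col_range P = col_range (V * Ip)" using Pr span[OF V] by simp
    obtain X where X: "X \<in> carrier_mat nc nc" "P = V * Ip * X" using range_factor[OF P VIp] r by auto
    obtain X' where X': "X' \<in> carrier_mat nc nc" "V * Ip = P * X'" using range_factor[OF VIp P] r by auto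
    have dd: "dim_row V = n" "dim_col V = n" "dim_row Vi = n" "dim_col Vi = n" "dim_row Ip = n" "dim_col Ip = nc"
      "dim_row X = nc" "dim_col X = nc" "dim_row X' = nc" "dim_col X' = nc" "dim_row Ipt = nc" "dim_col Ipt = n"
      using V Vi Ip Ipt X X' by auto
    have "Ip = Vi * (V * Ip)" by (rule cancel_dim[OF ViV, symmetric]) (use dd in simp_all)
    also have "V * Ip = V * Ip * X * X'" using X'(2) X(2) by simp
    also have "Vi * (V * Ip * X * X') = Vi * (V * (Ip * (X * X')))" using dd by (simp add: assoc_dim)
    also have "\<dots> = Ip * (X * X')" by (rule cancel_dim[OF ViV]) (use dd in simp_all)
    finally have h: "Ip = Ip * (X * X')" .
    have "X * X' = (Ipt * Ip) * (X * X')" unfolding IptIp using dd by simp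
    also have "\<dots> = Ipt * (Ip * (X * X'))" using dd by (simp add: assoc_dim)
    also have "\<dots> = Ipt * Ip" using h by simp
    finally have "X * X' = 1\<^sub>m nc" unfolding IptIp .
    with X X' show ?thesis by blast
  qed
  obtain X X' where X: "X \<in> carrier_mat nc nc" and X': "X' \<in> carrier_mat nc nc"
    and PshX: "Psh = Vr * Ip * X" and XX': "X * X' = 1\<^sub>m nc"
    using factor[OF Vr W WVr Psh Psh_range] by blast
  obtain Y Y' where Y: "Y \<in> carrier_mat nc nc" and Y': "Y' \<in> carrier_mat nc nc"
    and RshY: "Rsh = Vl * Ip * Y" and YY': "Y * Y' = 1\<^sub>m nc"
    using factor[OF Vl Vli VliVl Rsh Rsh_range] by blast
  have X'X: "X' * X = 1\<^sub>m nc" by (rule mat_mult_left_right_inverse[OF X X' XX'])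
  have Y'Y: "Y' * Y = 1\<^sub>m nc" by (rule mat_mult_left_right_inverse[OF Y Y' YY'])
  define DA where "DA = adj Vl * A * Vr"
  have DA: "DA \<in> carrier_mat n n" unfolding DA_def using Vl A Vr adj_carrier[of Vl] dims by simp
  define d where "d j = DA $$ (j,j)" for j
  have DA_rd: "DA = rd n n d"
  proof (rule eq_matI)
    fix i j assume "i < dim_row (rd n n d)" "j < dim_col (rd n n d)"
    hence i: "i < n" and j: "j < n" by auto
    show "DA $$ (i,j) = rd n n d $$ (i,j)"
    proof (cases "i = j")
      case True then show ?thesis using i j unfolding d_def by simp
    next
      case False
      have "DA $$ (i,j) = 0" using diagA False i j DA unfolding DA_def[symmetric] diagonal_mat_def by auto
      then show ?thesis using False i j by simp
    qed
  qed (use DA in auto)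
  have adjVl: "adj Vl \<in> carrier_mat n n" using adj_carrier[of Vl] dims by simp
  have adjVli: "adj Vli \<in> carrier_mat n n" using adj_carrier[of Vli] dims by simp
  have d_nz: "d j \<noteq> 0" if j: "j < n" for j
  proof
    assume dj: "d j = 0"
    define Z where "Z = W * (Ai * adj Vli)"
    have Z: "Z \<in> carrier_mat n n" unfolding Z_def using W Ai adjVli by simp
    have "DA * Z = adj Vl * (A * (Vr * (W * (Ai * adj Vli))))"
      unfolding DA_def Z_def using dims adjVl adjVli by (simp add: assoc_dim)
    also have "Vr * (W * (Ai * adj Vli)) = Ai * adj Vli" by (rule cancel_dim[OF VrW]) (use dims adjVli in simp_all)
    also have "A * (Ai * adj Vli) = adj Vli" by (rule cancel_dim[OF AAi]) (use dims adjVli in simp_all)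
    also have "adj Vl * adj Vli = adj (Vli * Vl)" by (rule adj_mult[OF Vli Vl, symmetric])
    also have "\<dots> = 1\<^sub>m n" unfolding VliVl by simp
    finally have DZ: "DA * Z = 1\<^sub>m n" .
    have "(1::complex) = (DA * Z) $$ (j,j)" unfolding DZ using j by simp
    also have "\<dots> = d j * Z $$ (j,j)" unfolding DA_rd rd_mult_index[OF Z j j] using j by simp
    also have "\<dots> = 0" using dj by simp
    finally show False by simp
  qed
  have adjVlA: "adj Vl * A = rd n n d * W"
  proof -
    have "adj Vl * A = adj Vl * A * (Vr * W)" unfolding VrW using dims adjVl by simp
    also have "\<dots> = DA * W" unfolding DA_def using dims adjVl by (simp add: assoc_dim)
    finally show ?thesis unfolding DA_rd .
  qed
  define Dc where "Dc = rd nc nc d"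
  define Dci where "Dci = rd nc nc (\<lambda>j. 1 / d j)"
  define Dn where "Dn = rd n n d"
  have Dc: "Dc \<in> carrier_mat nc nc" and Dci: "Dci \<in> carrier_mat nc nc" and Dn: "Dn \<in> carrier_mat n n"
    unfolding Dc_def Dci_def Dn_def by simp_all
  have DcDci: "Dc * Dci = 1\<^sub>m nc" unfolding Dc_def Dci_def rd_mult one_rd
    by (rule rd_cong) (use d_nz nc in simp)
  have adjY: "adj Y \<in> carrier_mat nc nc" and adjY': "adj Y' \<in> carrier_mat nc nc"
    using adj_carrier[of Y] adj_carrier[of Y'] Y Y' by auto
  have adjYY': "adj Y * adj Y' = 1\<^sub>m nc" unfolding adj_mult[OF Y' Y, symmetric] Y'Y by simp
  have adjY'Y: "adj Y' * adj Y = 1\<^sub>m nc" unfolding adj_mult[OF Y Y', symmetric] YY' by simp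
  have adjRsh: "adj Rsh = adj Y * (Ipt * adj Vl)"
  proof -
    have VlIp: "Vl * Ip \<in> carrier_mat n nc" using Vl Ip by simp
    show ?thesis unfolding RshY adj_mult[OF VlIp Y] adj_mult[OF Vl Ip] adjIp ..
  qed
  have dd: "dim_row Ip = n" "dim_col Ip = nc" "dim_row Ipt = nc" "dim_col Ipt = n"
    "dim_row X = nc" "dim_col X = nc" "dim_row X' = nc" "dim_col X' = nc"
    "dim_row Y = nc" "dim_col Y = nc" "dim_row Y' = nc" "dim_col Y' = nc"
    "dim_row (adj Y) = nc" "dim_col (adj Y) = nc" "dim_row (adj Y') = nc" "dim_col (adj Y') = nc"
    "dim_row (adj Vl) = n" "dim_col (adj Vl) = n"
    "dim_row Dc = nc" "dim_col Dc = nc" "dim_row Dci = nc" "dim_col Dci = nc" "dim_row Dn = n" "dim_col Dn = n"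
    by (simp_all only: carrier_matD[OF Ip] carrier_matD[OF Ipt] carrier_matD[OF X] carrier_matD[OF X']
       carrier_matD[OF Y] carrier_matD[OF Y'] carrier_matD[OF adjY] carrier_matD[OF adjY'] carrier_matD[OF adjVl]
       carrier_matD[OF Dc] carrier_matD[OF Dci] carrier_matD[OF Dn])
  have core1: "Ipt * (Dn * (Ip * X)) = Dc * X"
  proof -
    have "Ipt * (Dn * (Ip * X)) = ((Ipt * Dn) * Ip) * X" using dd by (simp add: assoc_dim)
    also have "(Ipt * Dn) * Ip = Dc" unfolding Ipt_def Dn_def Ip_def Dc_def rd_mult
      by (rule rd_cong) (use nc in simp)
    finally show ?thesis .
  qed
  define C where "C = adj Rsh * A * Psh"
  have C_eq: "C = adj Y * (Dc * X)"
  proof -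
    have "C = adj Y * (Ipt * (adj Vl * (A * (Vr * (Ip * X)))))"
      unfolding C_def adjRsh PshX using dims dd by (simp add: assoc_dim)
    also have "adj Vl * (A * (Vr * (Ip * X))) = Dn * (W * (Vr * (Ip * X)))"
    proof -
      have "adj Vl * (A * (Vr * (Ip * X))) = (adj Vl * A) * (Vr * (Ip * X))" using dims dd by (simp add: assoc_dim)
      also have "\<dots> = Dn * (W * (Vr * (Ip * X)))" unfolding adjVlA Dn_def[symmetric] using dims dd by (simp add: assoc_dim)
      finally show ?thesis .
    qed
    also have "W * (Vr * (Ip * X)) = Ip * X" by (rule cancel_dim[OF WVr]) (use dims dd in simp_all)
    also note core1
    finally show ?thesis .
  qed
  define Ci where "Ci = X' * (Dci * adj Y')"
  have C: "C \<in> carrier_mat nc nc" unfolding C_eq using adjY Dc X by simp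
  have Ci: "Ci \<in> carrier_mat nc nc" unfolding Ci_def using X' Dci adjY' by simp
  have CCi: "C * Ci = 1\<^sub>m nc"
  proof -
    have "C * Ci = adj Y * (Dc * (X * (X' * (Dci * adj Y'))))" unfolding C_eq Ci_def using dd by (simp add: assoc_dim)
    also have "X * (X' * (Dci * adj Y')) = Dci * adj Y'" by (rule cancel_dim[OF XX']) (use dd in simp_all)
    also have "Dc * (Dci * adj Y') = adj Y'" by (rule cancel_dim[OF DcDci]) (use dd in simp_all)
    also note adjYY'
    finally show ?thesis .
  qed
  have minvC: "minv C = Ci" by (rule minv_unique(1)[OF C Ci CCi])
  define q where "q j = (if j < nc then 1 else 0 :: complex)" for j
  have core2: "Ip * (Dci * (Ipt * (Dn * W))) = rd n n q * W"
  proof -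
    have "Ip * (Dci * (Ipt * (Dn * W))) = (((Ip * Dci) * Ipt) * Dn) * W" using dims dd by (simp add: assoc_dim)
    also have "((Ip * Dci) * Ipt) * Dn = rd n n q" unfolding Ip_def Dci_def Ipt_def Dn_def rd_mult
      by (rule rd_cong) (use d_nz nc in \<open>auto simp: q_def\<close>)
    finally show ?thesis .
  qed
  have Pi_eq: "proj A Psh Rsh = Vr * rd n n q * W"
  proof -
    have "proj A Psh Rsh = Psh * Ci * adj Rsh * A" unfolding proj_def minvC[unfolded C_def] ..
    also have "\<dots> = Vr * (Ip * (X * (X' * (Dci * (adj Y' * (adj Y * (Ipt * (adj Vl * A))))))))"
      unfolding Ci_def adjRsh PshX using dims dd by (simp add: assoc_dim)
    also have "adj Y' * (adj Y * (Ipt * (adj Vl * A))) = Ipt * (adj Vl * A)"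
      by (rule cancel_dim[OF adjY'Y]) (use dims dd in simp_all)
    also have "X * (X' * (Dci * (Ipt * (adj Vl * A)))) = Dci * (Ipt * (adj Vl * A))"
      by (rule cancel_dim[OF XX']) (use dims dd in simp_all)
    also have "adj Vl * A = Dn * W" unfolding adjVlA Dn_def ..
    also note core2
    also have "Vr * (rd n n q * W) = Vr * rd n n q * W" using dims by (simp add: assoc_dim)
    finally show ?thesis .
  qed
  define dl where "dl j = (if j < nc then 0 else (1 - lam j) ^ (nu1 + nu2))" for j
  define Et where "Et = E_TG A M nu1 nu2 Psh Rsh"
  have Q: "rd n n q \<in> carrier_mat n n" by simp
  have oneQ: "1\<^sub>m n - rd n n q = rd n n (\<lambda>j. 1 - q j)" unfolding one_rd rd_minus ..
  have Et_eq: "Et = Vr * rd n n dl * W"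
  proof -
    have "Et = Sm ^\<^sub>m nu2 * (1\<^sub>m n - proj A Psh Rsh) * Sm ^\<^sub>m nu1"
      unfolding Et_def E_TG_def Let_def Sm_def Mi_def dims(1) ..
    also have "\<dots> = (Vr * rd n n (\<lambda>j. (1 - lam j) ^ nu2) * W) * (Vr * rd n n (\<lambda>j. 1 - q j) * W)
        * (Vr * rd n n (\<lambda>j. (1 - lam j) ^ nu1) * W)"
      unfolding Spow Pi_eq conj_minus[OF VrW W Vr Q] oneQ ..
    also have "\<dots> = (Vr * (rd n n (\<lambda>j. (1 - lam j) ^ nu2) * rd n n (\<lambda>j. 1 - q j)) * W)
        * (Vr * rd n n (\<lambda>j. (1 - lam j) ^ nu1) * W)"
      unfolding conj_mult[OF WVr W Vr rd_carrier rd_carrier] ..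
    also have "\<dots> = Vr * (rd n n (\<lambda>j. (1 - lam j) ^ nu2) * rd n n (\<lambda>j. 1 - q j) * rd n n (\<lambda>j. (1 - lam j) ^ nu1)) * W"
      by (rule conj_mult[OF WVr W Vr mult_carrier_mat[OF rd_carrier rd_carrier] rd_carrier])
    also have "rd n n (\<lambda>j. (1 - lam j) ^ nu2) * rd n n (\<lambda>j. 1 - q j) * rd n n (\<lambda>j. (1 - lam j) ^ nu1) = rd n n dl"
      unfolding rd_mult by (rule rd_cong) (auto simp: dl_def q_def power_add mult.commute)
    finally show ?thesis .
  qed
  have Etk: "Et ^\<^sub>m k = Vr * rd n n (\<lambda>j. dl j ^ k) * W"
    unfolding Et_eq conj_pow[OF WVr VrW W Vr rd_carrier] rd_pow ..
  define val where "val = (if nc < n then cmod (1 - lam nc) ^ (nu1 + nu2) else 0)"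
  have val0: "0 \<le> val" unfolding val_def by simp
  have mk: "Max ((\<lambda>j. cmod (dl j ^ k')) ` {..<n}) = val ^ k'" if "1 \<le> k'" for k'
    unfolding dl_def val_def by (rule max_val[OF order nc that])
  have m1: "Max ((\<lambda>j. cmod (dl j)) ` {..<n}) = val" using mk[of 1] by simp
  have sr: "spectral_radius Et = val" unfolding Et_eq spectral_radius_conj[OF WVr VrW W Vr] m1 ..
  define N where "N = adj (minv Vr) * adj (dmat n u) * dmat n u * minv Vr"
  have N_eq: "N = adj W * adj (rd n n u) * rd n n u * W" unfolding N_def W_def dmat_rd ..
  have "mnormN N Et = Max ((\<lambda>j. cmod (dl j)) ` {..<n})"
    unfolding N_eq Et_eq by (rule final_norm[OF Vr W VrW WVr u n0])
  hence nE: "mnormN N Et = val" unfolding m1 .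
  have "mnormN N (Et ^\<^sub>m k) = Max ((\<lambda>j. cmod (dl j ^ k)) ` {..<n})"
    unfolding N_eq Etk by (rule final_norm[OF Vr W VrW WVr u n0])
  hence nEk: "mnormN N (Et ^\<^sub>m k) = val ^ k" unfolding mk[OF k] .
  have rt: "root k (mnormN N (Et ^\<^sub>m k)) = val" unfolding nEk using k val0 by (simp add: real_root_power_cancel)
  show ?thesis unfolding Let_def N_def[symmetric] Et_def[symmetric] val_def[symmetric] using sr nE rt by simp
qed

end
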